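(* Let $m,r$ be integers with $m>1$, $r>2$, and let $S\in\mathcal{MA}(m,r)$. Define $S_0=S$ and, for $n\in\mathbb{N}$, $S_{n+1}=\langle \mathrm{msg}(S_n)\setminus\{\mathrm{M}(S_n)\}\rangle$ if $S_n\neq\langle m,r\rangle$, and $S_{n+1}=\langle m,r\rangle$ otherwise. Then $S_n\in\mathcal{MA}(m,r)$ for all $n\in\mathbb{N}$, and $S_k=\langle m,r\rangle$ for all $k\geq \mathrm{e}(S)-2$.
   Context: $\mathbb{N}=\{0,1,2,\ldots\}$. A numerical semigroup is a subset $S\subseteq\mathbb{N}$ closed under addition, containing $0$, with finite complement; $\langle A\rangle$ is the submonoid generated by $A$; $\mathrm{msg}(S)=\{n_1<\cdots<n_e\}$ is the unique finite minimal system of generators, $\mathrm{e}(S)=e$, $\mathrm{m}(S)=n_1$, $\mathrm{r}(S)=n_2$, $\mathrm{M}(S)=n_e$. $S$ is a MANS-semigroup if $w(1)<\cdots<w(\mathrm{m}(S)-1)$, where $w(i)$ is the least element of $S$ congruent to $i$ modulo $\mathrm{m}(S)$. $\mathcal{MA}(m,r)$ is the set of MANS-semigroups $S$ with $\mathrm{m}(S)=m$ and $\mathrm{r}(S)=r$. *)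

theory Defs
  imports Main
begin

inductive_set gen :: "nat set \<Rightarrow> nat set" for A :: "nat set" where
  gen_zero: "0 \<in> gen A"
| gen_add: "a \<in> A \<Longrightarrow> x \<in> gen A \<Longrightarrow> a + x \<in> gen A"

definition numerical_semigroup :: "nat set \<Rightarrow> bool" where
  "numerical_semigroup S \<longleftrightarrow> 0 \<in> S \<and> (\<forall>x\<in>S. \<forall>y\<in>S. x + y \<in> S) \<and> finite (UNIV - S)"

definition msg :: "nat set \<Rightarrow> nat set" where
  "msg S = (THE A. gen A = S \<and> (\<forall>B. B \<subset> A \<longrightarrow> gen B \<noteq> S))"

definition embdim :: "nat set \<Rightarrow> nat" where
  "embdim S = card (msg S)"

definition mult :: "nat set \<Rightarrow> nat" where
  "mult S = Min (msg S)"

definition sgen :: "nat set \<Rightarrow> nat" where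
  "sgen S = Min (msg S - {mult S})"

definition maxgen :: "nat set \<Rightarrow> nat" where
  "maxgen S = Max (msg S)"

definition wS :: "nat set \<Rightarrow> nat \<Rightarrow> nat" where
  "wS S i = (LEAST x. x \<in> S \<and> x mod mult S = i mod mult S)"

definition MANS :: "nat set \<Rightarrow> bool" where
  "MANS S \<longleftrightarrow> numerical_semigroup S \<and>
     (\<forall>i j. 1 \<le> i \<and> i < j \<and> j \<le> mult S - 1 \<longrightarrow> wS S i < wS S j)"

definition MA :: "nat \<Rightarrow> nat \<Rightarrow> nat set set" where
  "MA m r = {S. MANS S \<and> mult S = m \<and> sgen S = r}"

end

theory Submission
  imports Defs
begin

lemma gen_closed: "x \<in> gen A \<Longrightarrow> y \<in> gen A \<Longrightarrow> x + y \<in> gen A"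
  by (induction x rule: gen.induct) (auto simp: add.assoc intro: gen.gen_add)

lemma gen_subset: "a \<in> A \<Longrightarrow> a \<in> gen A"
  using gen.gen_add[of a A 0] gen.gen_zero by simp

lemma gen_mono: "A \<subseteq> B \<Longrightarrow> gen A \<subseteq> gen B"
proof
  fix x assume h: "A \<subseteq> B" "x \<in> gen A"
  from h(2) h(1) show "x \<in> gen B" by (induction x rule: gen.induct) (auto intro: gen.intros)
qed

lemma gen_least: "0 \<in> S \<Longrightarrow> (\<forall>x\<in>S. \<forall>y\<in>S. x + y \<in> S) \<Longrightarrow> A \<subseteq> S \<Longrightarrow> gen A \<subseteq> S"
proof
  fix x assume h: "0 \<in> S" "\<forall>x\<in>S. \<forall>y\<in>S. x + y \<in> S" "A \<subseteq> S" and "x \<in> gen A"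
  from this(4) show "x \<in> S" using h by (induction x rule: gen.induct) auto
qed

lemma gen_small: "x \<in> gen B \<Longrightarrow> x \<in> gen {b\<in>B. b \<le> x}"
proof (induction x rule: gen.induct)
  case gen_zero then show ?case by (rule gen.gen_zero)
next
  case (gen_add a x)
  have "gen {b\<in>B. b \<le> x} \<subseteq> gen {b\<in>B. b \<le> a + x}" by (rule gen_mono) auto
  with gen_add have "x \<in> gen {b\<in>B. b \<le> a + x}" by blast
  then show ?case using gen_add(1) by (intro gen.gen_add) auto
qed

lemma gen_mult: "a \<in> gen A \<Longrightarrow> k * a \<in> gen A"
  by (induction k) (auto intro: gen.gen_zero gen_closed)

lemma gen_empty: "x \<in> gen {} \<Longrightarrow> x = 0"
  by (induction x rule: gen.induct) auto

definition submon :: "nat set \<Rightarrow> bool" where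
  "submon S \<longleftrightarrow> 0 \<in> S \<and> (\<forall>x\<in>S. \<forall>y\<in>S. x + y \<in> S)"

lemma submon_gen: "submon (gen A)"
  unfolding submon_def by (auto intro: gen.gen_zero gen_closed)

lemma submon_mult: "submon S \<Longrightarrow> a \<in> S \<Longrightarrow> k * a \<in> S"
  by (induction k) (auto simp: submon_def)

definition atoms :: "nat set \<Rightarrow> nat set" where
  "atoms S = {x\<in>S. x \<noteq> 0 \<and> \<not>(\<exists>y\<in>S. \<exists>z\<in>S. y \<noteq> 0 \<and> z \<noteq> 0 \<and> x = y + z)}"

lemma gen_atoms: assumes "submon S" shows "gen (atoms S) = S"
proof
  show "gen (atoms S) \<subseteq> S" using assms unfolding submon_def atoms_def
    by (intro gen_least) auto
next
  show "S \<subseteq> gen (atoms S)"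
  proof
    fix s assume "s \<in> S"
    then show "s \<in> gen (atoms S)"
    proof (induction s rule: less_induct)
      case (less s)
      show ?case
      proof (cases "s \<in> atoms S")
        case True then show ?thesis by (rule gen_subset)
      next
        case na: False
        show ?thesis
        proof (cases "s = 0")
          case True then show ?thesis by (simp add: gen.gen_zero)
        next
          case False
          with na less.prems obtain y z where "y \<in> S" "z \<in> S" "y \<noteq> 0" "z \<noteq> 0" "s = y + z"
            unfolding atoms_def by auto
          then show ?thesis using less.IH[of y] less.IH[of z] by (auto intro: gen_closed)
        qed
      qed
    qed
  qed
qed

lemma atoms_minimal: assumes "submon S" "B \<subset> atoms S" shows "gen B \<noteq> S"
proof
  assume gB: "gen B = S"
  obtain a where a: "a \<in> atoms S" "a \<notin> B" using assms(2) by auto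
  then have "a \<in> gen B" using gB unfolding atoms_def by auto
  moreover have "a \<noteq> 0" using a unfolding atoms_def by auto
  ultimately obtain b y where bb: "b \<in> B" "y \<in> gen B" "a = b + y"
    by (metis gen.cases)
  have "b \<in> atoms S" using bb assms(2) by auto
  then have "b \<in> S" "b \<noteq> 0" unfolding atoms_def by auto
  show False
  proof (cases "y = 0")
    case True then show False using bb a by auto
  next
    case False then show False using a(1) bb \<open>b \<in> S\<close> \<open>b \<noteq> 0\<close> gB unfolding atoms_def by auto
  qed
qed

lemma atoms_unique: assumes "gen A = S" "\<forall>B. B \<subset> A \<longrightarrow> gen B \<noteq> S" shows "A = atoms S"
proof -
  have AS: "A \<subseteq> S" using assms(1) gen_subset by blast
  have n0: "0 \<notin> A"
  proof
    assume "0 \<in> A"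
    have "gen A \<subseteq> gen (A - {0})"
    proof
      fix x assume "x \<in> gen A" then show "x \<in> gen (A - {0})"
      proof (induction x rule: gen.induct)
        case gen_zero then show ?case by (rule gen.gen_zero)
      next
        case (gen_add a x)
        show ?case
        proof (cases "a = 0")
          case True then show ?thesis using gen_add by simp
        next
          case False then show ?thesis using gen_add by (intro gen.gen_add) auto
        qed
      qed
    qed
    then have "gen (A - {0}) = S" using assms(1) gen_mono[of "A - {0}" A] by auto
    moreover have "A - {0} \<subset> A" using \<open>0 \<in> A\<close> by auto
    ultimately show False using assms(2) by auto
  qed
  show ?thesis
  proof
    show "A \<subseteq> atoms S"
    proof
      fix a assume aA: "a \<in> A"
      show "a \<in> atoms S"
      proof (rule ccontr)
        assume "a \<notin> atoms S"
        with aA AS n0 obtain y z where yz: "y \<in> S" "z \<in> S" "y \<noteq> 0" "z \<noteq> 0" "a = y + z"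
          unfolding atoms_def by auto
        have "y \<in> gen {b\<in>A. b \<le> y}" using yz assms(1) gen_small by simp
        moreover have "gen {b\<in>A. b \<le> y} \<subseteq> gen (A - {a})" using yz by (intro gen_mono) auto
        ultimately have y1: "y \<in> gen (A - {a})" by (rule rev_subsetD)
        have "z \<in> gen {b\<in>A. b \<le> z}" using yz assms(1) gen_small by simp
        moreover have "gen {b\<in>A. b \<le> z} \<subseteq> gen (A - {a})" using yz by (intro gen_mono) auto
        ultimately have z1: "z \<in> gen (A - {a})" by (rule rev_subsetD)
        from gen_closed[OF y1 z1] have ag: "a \<in> gen (A - {a})" by (subst (1) yz(5))
        have "A \<subseteq> gen (A - {a})"
        proof
          fix b assume "b \<in> A"
          show "b \<in> gen (A - {a})"
          proof (cases "b = a")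
            case True then show ?thesis using ag by simp
          next
            case False then show ?thesis using \<open>b \<in> A\<close> by (intro gen_subset) simp
          qed
        qed
        then have "gen A \<subseteq> gen (A - {a})"
          using submon_gen[of "A - {a}"] unfolding submon_def by (intro gen_least) auto
        then have "gen (A - {a}) = S" using assms(1) gen_mono[of "A - {a}" A] by auto
        moreover have "A - {a} \<subset> A" using aA by auto
        ultimately show False using assms(2) by auto
      qed
    qed
  next
    show "atoms S \<subseteq> A"
    proof
      fix x assume x: "x \<in> atoms S"
      then have "x \<in> gen A" "x \<noteq> 0" using assms(1) unfolding atoms_def by auto
      then obtain b y where bb: "b \<in> A" "y \<in> gen A" "x = b + y" by (metis gen.cases)
      have "b \<noteq> 0" using n0 bb(1) by metis
      show "x \<in> A"
      proof (cases "y = 0")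
        case True then show ?thesis using bb by auto
      next
        case False then show ?thesis using x bb \<open>b \<noteq> 0\<close> gen_subset[OF bb(1)] AS assms(1) unfolding atoms_def by auto
      qed
    qed
  qed
qed

lemma msg_eq: assumes "submon S" shows "msg S = atoms S"
  unfolding msg_def
proof (rule the_equality)
  show "gen (atoms S) = S \<and> (\<forall>B. B \<subset> atoms S \<longrightarrow> gen B \<noteq> S)"
    using gen_atoms atoms_minimal assms by blast
next
  fix A assume "gen A = S \<and> (\<forall>B. B \<subset> A \<longrightarrow> gen B \<noteq> S)"
  then show "A = atoms S" using atoms_unique by blast
qed

lemma msg_gen: "submon S \<Longrightarrow> gen (msg S) = S"
  using msg_eq gen_atoms by simp

lemma msg_min: "submon S \<Longrightarrow> B \<subset> msg S \<Longrightarrow> gen B \<noteq> S"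
  using msg_eq atoms_minimal by simp

lemma msg_char: "gen A = S \<Longrightarrow> \<forall>B. B \<subset> A \<longrightarrow> gen B \<noteq> S \<Longrightarrow> msg S = A"
  using msg_eq atoms_unique submon_gen by metis

lemma msg_sub: "submon S \<Longrightarrow> msg S \<subseteq> S"
  using msg_eq unfolding atoms_def by auto

lemma msg_nz: "submon S \<Longrightarrow> x \<in> msg S \<Longrightarrow> x \<noteq> 0"
  using msg_eq unfolding atoms_def by auto

lemma msg_atom: "submon S \<Longrightarrow> x \<in> msg S \<Longrightarrow> y \<in> S \<Longrightarrow> z \<in> S \<Longrightarrow> y \<noteq> 0 \<Longrightarrow> z \<noteq> 0 \<Longrightarrow> x \<noteq> y + z"
  using msg_eq unfolding atoms_def by auto

lemma ns_submon: "numerical_semigroup S \<Longrightarrow> submon S"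
  unfolding numerical_semigroup_def submon_def by auto

lemma ns_big: assumes "numerical_semigroup S" shows "\<exists>c. \<forall>y\<ge>c. y \<in> S"
proof -
  have "finite (UNIV - S)" using assms unfolding numerical_semigroup_def by auto
  then obtain c where "\<forall>y\<in>UNIV - S. y < c" using finite_nat_set_iff_bounded by blast
  then show ?thesis by (metis DiffI UNIV_I not_le)
qed

lemma ns_msg_finite: assumes "numerical_semigroup S" shows "finite (msg S)"
proof -
  obtain c where c: "\<forall>y\<ge>c. y \<in> S" using ns_big assms by blast
  have "msg S \<subseteq> {..<2 * Suc c}"
  proof
    fix x assume x: "x \<in> msg S"
    show "x \<in> {..<2 * Suc c}"
    proof (rule ccontr)
      assume "x \<notin> {..<2 * Suc c}"
      then have "x \<ge> 2 * Suc c" by auto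
      then have "Suc c \<in> S" "x - Suc c \<in> S" "x = Suc c + (x - Suc c)" using c by auto
      then show False using msg_atom[OF ns_submon[OF assms] x] \<open>x \<ge> 2 * Suc c\<close> by force
    qed
  qed
  then show ?thesis using finite_subset by blast
qed

lemma ns_msg_ne: assumes "numerical_semigroup S" shows "msg S \<noteq> {}"
proof
  assume "msg S = {}"
  then have "S = gen {}" using msg_gen[OF ns_submon[OF assms]] by simp
  obtain c where c: "\<forall>y\<ge>c. y \<in> S" using ns_big assms by blast
  then have "Suc c \<in> gen {}" using \<open>S = gen {}\<close> by auto
  then show False using gen_empty by fastforce
qed

lemma mult_props: assumes "numerical_semigroup S"
  shows "mult S \<in> msg S" "mult S \<in> S" "mult S > 0" "\<And>a. a \<in> msg S \<Longrightarrow> mult S \<le> a"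
proof -
  have f: "finite (msg S)" and ne: "msg S \<noteq> {}" using ns_msg_finite[OF assms] ns_msg_ne[OF assms] by auto
  show i: "mult S \<in> msg S" unfolding mult_def using Min_in[OF f ne] .
  show "mult S \<in> S" using i msg_sub[OF ns_submon[OF assms]] by blast
  show "mult S > 0" using i msg_nz[OF ns_submon[OF assms]] by blast
  show "\<And>a. a \<in> msg S \<Longrightarrow> mult S \<le> a" unfolding mult_def using Min_le[OF f] by blast
qed

lemma wS_props:
  assumes "numerical_semigroup S" "mult S = m"
  shows "wS S i \<in> S" "wS S i mod m = i mod m" "\<And>x. x\<in>S \<Longrightarrow> x mod m = i mod m \<Longrightarrow> wS S i \<le> x"
proof -
  obtain c where c: "\<forall>y\<ge>c. y \<in> S" using ns_big assms by blast
  have "m > 0" using mult_props(3)[OF assms(1)] assms(2) by simp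
  then have "c * 1 \<le> c * m" by (intro mult_le_mono2) simp
  then have "c * m + i mod m \<ge> c" by linarith
  then have "c*m + i mod m \<in> S" using c by simp
  moreover have "(c*m + i mod m) mod m = i mod m" by simp
  ultimately have ex: "\<exists>x. x\<in>S \<and> x mod m = i mod m" by (intro exI conjI)
  have wd: "wS S i = (LEAST x. x \<in> S \<and> x mod m = i mod m)" unfolding wS_def assms(2) ..
  have "wS S i \<in> S \<and> wS S i mod m = i mod m" unfolding wd by (rule LeastI_ex[OF ex])
  then show "wS S i \<in> S" "wS S i mod m = i mod m" by simp_all
  show "\<And>x. x\<in>S \<Longrightarrow> x mod m = i mod m \<Longrightarrow> wS S i \<le> x" unfolding wd by (rule Least_le) simp
qed

lemma same_res: assumes "submon S" "m \<in> S" "w \<in> S" "w \<le> y" "y mod m = w mod m" shows "y \<in> S"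
proof -
  have "m dvd (y - w)" using mod_eq_dvd_iff_nat[OF assms(4)] assms(5) by simp
  then obtain q where "y - w = m * q" by (rule dvdE)
  then have "y - w = q * m" by simp
  then have yq: "y = w + q * m" using assms(4) by auto
  have qm: "q * m \<in> S" by (rule submon_mult[OF assms(1,2)])
  have cl: "\<forall>x\<in>S. \<forall>y\<in>S. x + y \<in> S" using assms(1) unfolding submon_def by simp
  have "w + q * m \<in> S" using bspec[OF bspec[OF cl assms(3)] qm] .
  then show ?thesis unfolding yq .
qed

lemma mod_helper: "(j::nat) < m \<Longrightarrow> (m * q + j) mod m = j"
  by simp

lemma MANS_imp:
  assumes "MANS S" "mult S = m" "x \<in> S" "x mod m \<ge> 2"
  shows "x - 1 \<in> S"
proof -
  have ns: "numerical_semigroup S" using assms(1) unfolding MANS_def by simp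
  have mS: "m \<in> S" using mult_props(2)[OF ns] assms(2) by simp
  have mpos: "m > 0" using mult_props(3)[OF ns] assms(2) by simp
  define i where "i = x mod m"
  have "i < m" unfolding i_def using mpos by simp
  then have i: "2 \<le> i" "i \<le> m - 1" using assms(4) unfolding i_def by simp_all
  have lt: "wS S (i - 1) < wS S i" using assms(1) i unfolding MANS_def assms(2) by simp
  have "x mod m = i mod m" unfolding i_def by simp
  then have "wS S i \<le> x" by (rule wS_props(3)[OF ns assms(2) assms(3)])
  have "wS S (i - 1) mod m = (i - 1) mod m" by (rule wS_props(2)[OF ns assms(2)])
  then have r1: "wS S (i - 1) mod m = i - 1" using \<open>i < m\<close> by simp
  have r2: "(x - 1) mod m = i - 1"
  proof -
    have "x = m * (x div m) + i" unfolding i_def by simp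
    then have "x - 1 = m * (x div m) + (i - 1)" using i by simp
    moreover have "i - 1 < m" using \<open>i < m\<close> by simp
    ultimately show ?thesis using mod_helper by metis
  qed
  have le: "wS S (i - 1) \<le> x - 1" using lt \<open>wS S i \<le> x\<close> by linarith
  have eq: "(x - 1) mod m = wS S (i - 1) mod m" using r2 r1 by (metis)
  have ws: "wS S (i - 1) \<in> S" by (rule wS_props(1)[OF ns assms(2)])
  show ?thesis using same_res[OF ns_submon[OF ns] mS ws le eq] .
qed

lemma MANS_intro:
  assumes ns: "numerical_semigroup S" and mm: "mult S = m"
    and H: "\<And>x. x \<in> S \<Longrightarrow> x mod m \<ge> 2 \<Longrightarrow> x - 1 \<in> S"
  shows "MANS S"
proof -
  have mpos: "m > 0" using mult_props(3)[OF ns] mm by simp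
  have step: "wS S (j - 1) < wS S j" if j: "2 \<le> j" "j \<le> m - 1" for j
  proof -
    have jm: "j mod m = j" using j mpos by simp
    have w1': "wS S j \<in> S" by (rule wS_props(1)[OF ns mm])
    have w2': "wS S j mod m = j mod m" by (rule wS_props(2)[OF ns mm])
    have w2: "wS S j mod m = j" using w2' jm by simp
    have w1: "wS S j - 1 \<in> S" using H[OF w1'] w2 j(1) by simp
    have nz: "wS S j \<noteq> 0"
    proof
      assume "wS S j = 0"
      with w2 have "j = 0" by simp
      with j(1) show False by simp
    qed
    have e: "wS S j div m * m + wS S j mod m = wS S j" by (rule div_mult_mod_eq)
    have e2: "wS S j - 1 = m * (wS S j div m) + (j - 1)" using e w2 j(1) by (simp add: mult.commute)
    have "(wS S j - 1) mod m = j - 1" unfolding e2 by (rule mod_helper) (use j mpos in simp)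
    also have "j - 1 = (j - 1) mod m" using j mpos by simp
    finally have "wS S (j - 1) \<le> wS S j - 1" by (rule wS_props(3)[OF ns mm w1])
    then show ?thesis using nz by simp
  qed
  have ind: "wS S i < wS S (i + Suc d)" if "1 \<le> i" "i + Suc d \<le> m - 1" for i d
    using that
  proof (induction d)
    case 0 then show ?case using step[of "Suc i"] by simp
  next
    case (Suc d)
    then have "wS S i < wS S (i + Suc d)" by simp
    also have "\<dots> < wS S (i + Suc (Suc d))" using step[of "i + Suc (Suc d)"] Suc.prems by simp
    finally show ?case .
  qed
  have "\<forall>i j. 1 \<le> i \<and> i < j \<and> j \<le> mult S - 1 \<longrightarrow> wS S i < wS S j"
  proof (intro allI impI)
    fix i j assume h: "1 \<le> i \<and> i < j \<and> j \<le> mult S - 1"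
    then have "i < j" by simp
    then obtain d where "j = Suc (i + d)" by (blast dest: less_imp_Suc_add)
    then have jd: "j = i + Suc d" by simp
    have "i + Suc d \<le> m - 1" using h mm jd by simp
    then have "wS S i < wS S (i + Suc d)" using ind[of i d] h by simp
    then show "wS S i < wS S j" unfolding jd .
  qed
  then show ?thesis using ns unfolding MANS_def by blast
qed

lemma gen_single_dvd: "x \<in> gen {m} \<Longrightarrow> m dvd x"
  by (induction x rule: gen.induct) auto

lemma msg_minus_ne:
  assumes ns: "numerical_semigroup S" and mm: "mult S = m" and m1: "m > 1"
  shows "msg S - {m} \<noteq> {}"
proof
  assume e: "msg S - {m} = {}"
  have "msg S \<subseteq> {m}" using e by blast
  then have "gen (msg S) \<subseteq> gen {m}" by (rule gen_mono)
  then have Sm: "S \<subseteq> gen {m}" using msg_gen[OF ns_submon[OF ns]] by simp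
  obtain c where c: "\<forall>y\<ge>c. y \<in> S" using ns_big ns by blast
  have "c * 1 \<le> c * m" using m1 by (intro mult_le_mono2) simp
  then have "c * m + 1 \<ge> c" by linarith
  then have "c * m + 1 \<in> S" using c by simp
  then have "m dvd c * m + 1" using Sm gen_single_dvd by blast
  then have "m dvd 1" using dvd_add_right_iff[of m "c*m" 1] by simp
  then show False using m1 by simp
qed

lemma nonmult_ge:
  assumes ns: "numerical_semigroup S" and mm: "mult S = m" and m1: "m > 1"
    and x: "x \<in> S" and nd: "\<not> m dvd x"
  shows "Min (msg S - {m}) \<le> x"
proof -
  have fin: "finite (msg S - {m})" using ns_msg_finite[OF ns] by simp
  have "x \<in> gen (msg S)" using x msg_gen[OF ns_submon[OF ns]] by simp
  then show ?thesis using nd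
  proof (induction x rule: gen.induct)
    case gen_zero then show ?case by simp
  next
    case (gen_add a y)
    show ?case
    proof (cases "a = m")
      case True
      then have "\<not> m dvd y" using gen_add.prems by simp
      then have "Min (msg S - {m}) \<le> y" by (rule gen_add.IH)
      then show ?thesis by simp
    next
      case False
      then have "a \<in> msg S - {m}" using gen_add.hyps(1) by simp
      then have "Min (msg S - {m}) \<le> a" using Min_le[OF fin] by blast
      then show ?thesis by simp
    qed
  qed
qed

lemma MA_r:
  assumes SM: "S \<in> MA m r" and m1: "m > 1"
  shows "numerical_semigroup S" "MANS S" "mult S = m" "r \<in> msg S" "r \<noteq> m"
    "\<And>a. a \<in> msg S \<Longrightarrow> a \<noteq> m \<Longrightarrow> r \<le> a" "r mod m = 1"
proof -
  have M: "MANS S" and mm: "mult S = m" and sg: "sgen S = r" using SM unfolding MA_def by auto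
  show "MANS S" "mult S = m" by (rule M, rule mm)
  have ns: "numerical_semigroup S" using M unfolding MANS_def by simp
  show "numerical_semigroup S" by (rule ns)
  have fin: "finite (msg S - {m})" using ns_msg_finite[OF ns] by simp
  have ne: "msg S - {m} \<noteq> {}" by (rule msg_minus_ne[OF ns mm m1])
  have rmin: "r = Min (msg S - {m})" using sg mm unfolding sgen_def by simp
  have rin: "r \<in> msg S - {m}" unfolding rmin by (rule Min_in[OF fin ne])
  then show "r \<in> msg S" "r \<noteq> m" by simp_all
  show rle: "\<And>a. a \<in> msg S \<Longrightarrow> a \<noteq> m \<Longrightarrow> r \<le> a" unfolding rmin using Min_le[OF fin] by simp
  have sub: "submon S" by (rule ns_submon[OF ns])
  have mS: "m \<in> S" using mult_props(2)[OF ns] mm by simp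
  have rS: "r \<in> S" using rin msg_sub[OF sub] by blast
  have nd: "\<not> m dvd r"
  proof
    assume "m dvd r"
    then obtain q where q: "r = m * q" by (rule dvdE)
    have "r \<noteq> 0" using rin msg_nz[OF sub] by blast
    then have "q \<noteq> 0" using q by simp
    moreover have "q \<noteq> 1" using q rin by simp
    ultimately have q2: "q \<ge> 2" by simp
    have "m * q = m * Suc (q - 1)" using q2 by simp
    also have "\<dots> = m + (q - 1) * m" by (simp add: mult.commute)
    finally have r2: "r = m + (q - 1) * m" using q by simp
    have "(q - 1) * m \<in> S" by (rule submon_mult[OF sub mS])
    moreover have "(q - 1) * m \<noteq> 0" using q2 m1 by simp
    moreover have "m \<noteq> 0" using m1 by simp
    ultimately have "r \<noteq> m + (q - 1) * m" using msg_atom[OF sub _ mS] rin by blast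
    then show False using r2 by simp
  qed
  define i where "i = r mod m"
  have im: "i < m" unfolding i_def using m1 by simp
  have i0: "i \<noteq> 0" unfolding i_def using nd by (simp add: dvd_eq_mod_eq_0)
  show "r mod m = 1"
  proof (rule ccontr)
    assume "r mod m \<noteq> 1"
    then have i2: "2 \<le> i" using i0 unfolding i_def by simp
    have "wS S 1 < wS S i" using M i2 im mm unfolding MANS_def by simp
    moreover have "r mod m = i mod m" unfolding i_def by simp
    then have "wS S i \<le> r" by (rule wS_props(3)[OF ns mm rS])
    moreover have w1: "wS S 1 \<in> S" by (rule wS_props(1)[OF ns mm])
    moreover have "wS S 1 mod m = 1 mod m" by (rule wS_props(2)[OF ns mm])
    then have "wS S 1 mod m = 1" using m1 by simp
    then have "\<not> m dvd wS S 1" using m1 by (simp add: dvd_eq_mod_eq_0)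
    then have "Min (msg S - {m}) \<le> wS S 1" by (rule nonmult_ge[OF ns mm m1 w1])
    ultimately show False using rmin by simp
  qed
qed

lemma mod_add_split: "((h::nat) + y) mod m = (h mod m + y mod m) mod m"
  by (simp add: mod_add_eq)

lemma gen_pred_Q:
  assumes mG: "m \<in> G" and m1: "m > 1" and rG: "r \<in> G" and rm: "r mod m = 1"
    and b: "\<And>g. g \<in> G \<Longrightarrow> g mod m = 1 \<Longrightarrow> r \<le> g"
    and a: "\<And>g. g \<in> G \<Longrightarrow> g mod m \<ge> 2 \<Longrightarrow> g - 1 \<in> gen G"
  shows "x \<in> gen G \<Longrightarrow> g \<in> G \<Longrightarrow> g mod m = 1 \<Longrightarrow> x mod m \<ge> 1 \<Longrightarrow> g + x - 1 \<in> gen G"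
proof (induction x arbitrary: g rule: gen.induct)
  case gen_zero then show ?case by simp
next
  case (gen_add h y)
  have g1: "g \<ge> 1" using gen_add.prems(2) by (cases g) simp_all
  have gG: "g \<in> gen G" using gen_add.prems(1) by (rule gen_subset)
  have hG: "h \<in> gen G" using gen_add.hyps(1) by (rule gen_subset)
  have cases: "h mod m = 0 \<or> h mod m = 1 \<or> h mod m \<ge> 2" by arith
  show ?case
  proof -
    { assume h0: "h mod m = 0"
      have "(h + y) mod m = y mod m" using mod_add_split[of h y m] h0 by simp
      then have "y mod m \<ge> 1" using gen_add.prems(3) by simp
      then have "g + y - 1 \<in> gen G" using gen_add.IH gen_add.prems(1,2) by blast
      then have "h + (g + y - 1) \<in> gen G" using hG gen_closed by blast
      moreover have "h + (g + y - 1) = g + (h + y) - 1" using g1 by arith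
      ultimately have ?thesis by simp }
    moreover
    { assume h1: "h mod m = 1"
      have rg: "r \<le> g" using b gen_add.prems(1,2) by blast
      have rh: "r \<le> h" using b gen_add.hyps(1) h1 by blast
      have eg: "g div m * m + g mod m = g" by (rule div_mult_mod_eq)
      have eh: "h div m * m + h mod m = h" by (rule div_mult_mod_eq)
      have e: "g + h - 1 = m * (g div m + h div m) + 1"
        using eg eh h1 gen_add.prems(2) by (simp add: algebra_simps)
      have "(g + h - 1) mod m = 1" unfolding e by (rule mod_helper) (rule m1)
      then have "(g + h - 1) mod m = r mod m" using rm by simp
      moreover have "r \<le> g + h - 1" using rg rh by arith
      ultimately have "g + h - 1 \<in> gen G"
        using same_res[OF submon_gen gen_subset[OF mG] gen_subset[OF rG]] by blast
      then have "(g + h - 1) + y \<in> gen G" using gen_add.hyps(2) gen_closed by blast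
      moreover have "(g + h - 1) + y = g + (h + y) - 1" using g1 by arith
      ultimately have ?thesis by simp }
    moreover
    { assume h2: "h mod m \<ge> 2"
      have "h - 1 \<in> gen G" using a gen_add.hyps(1) h2 by blast
      then have "g + ((h - 1) + y) \<in> gen G" using gG gen_add.hyps(2) gen_closed by blast
      moreover have "h \<ge> 1" using h2 by (cases h) simp_all
      then have "g + ((h - 1) + y) = g + (h + y) - 1" by arith
      ultimately have ?thesis by simp }
    ultimately show ?thesis using cases by metis
  qed
qed

lemma gen_pred_P:
  assumes mG: "m \<in> G" and m1: "m > 1" and rG: "r \<in> G" and rm: "r mod m = 1"
    and b: "\<And>g. g \<in> G \<Longrightarrow> g mod m = 1 \<Longrightarrow> r \<le> g"
    and a: "\<And>g. g \<in> G \<Longrightarrow> g mod m \<ge> 2 \<Longrightarrow> g - 1 \<in> gen G"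
  shows "x \<in> gen G \<Longrightarrow> x mod m \<ge> 2 \<Longrightarrow> x - 1 \<in> gen G"
proof (induction x rule: gen.induct)
  case gen_zero then show ?case by simp
next
  case (gen_add h y)
  have hG: "h \<in> gen G" using gen_add.hyps(1) by (rule gen_subset)
  have cases: "h mod m = 0 \<or> h mod m = 1 \<or> h mod m \<ge> 2" by arith
  show ?case
  proof -
    { assume h0: "h mod m = 0"
      have "(h + y) mod m = y mod m" using mod_add_split[of h y m] h0 by simp
      then have y2: "y mod m \<ge> 2" using gen_add.prems by simp
      then have "y - 1 \<in> gen G" by (rule gen_add.IH)
      then have "h + (y - 1) \<in> gen G" using hG gen_closed by blast
      moreover have "y \<ge> 1" using y2 by (cases y) simp_all
      then have "h + (y - 1) = h + y - 1" by arith
      ultimately have ?thesis by simp }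
    moreover
    { assume h1: "h mod m = 1"
      have "y mod m \<noteq> 0"
      proof
        assume "y mod m = 0"
        then have "(h + y) mod m = 1" using mod_add_split[of h y m] h1 m1 by simp
        then show False using gen_add.prems by simp
      qed
      then have "y mod m \<ge> 1" by simp
      then have ?thesis using gen_pred_Q[OF assms gen_add.hyps(2) gen_add.hyps(1) h1] by simp }
    moreover
    { assume h2: "h mod m \<ge> 2"
      have "h - 1 \<in> gen G" using a gen_add.hyps(1) h2 by blast
      then have "(h - 1) + y \<in> gen G" using gen_add.hyps(2) gen_closed by blast
      moreover have "h \<ge> 1" using h2 by (cases h) simp_all
      then have "(h - 1) + y = h + y - 1" by arith
      ultimately have ?thesis by simp }
    ultimately show ?thesis using cases by metis
  qed
qed

lemma step_MA:
  assumes SM: "S \<in> MA m r" and m1: "m > 1" and ne: "S \<noteq> gen {m, r}"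
  shows "gen (msg S - {maxgen S}) \<in> MA m r"
    "msg (gen (msg S - {maxgen S})) = msg S - {maxgen S}"
    "card (msg S) \<ge> 3"
    "card (msg S - {maxgen S}) = card (msg S) - 1"
proof -
  define M where "M = msg S"
  define g where "g = maxgen S"
  define A where "A = M - {g}"
  have ns: "numerical_semigroup S" and M: "MANS S" and mm: "mult S = m" and rM: "r \<in> M"
    and rm: "r \<noteq> m" and rle: "\<And>a. a \<in> M \<Longrightarrow> a \<noteq> m \<Longrightarrow> r \<le> a" and rmod: "r mod m = 1"
    using MA_r[OF SM m1] unfolding M_def by auto
  have sub: "submon S" by (rule ns_submon[OF ns])
  have fin: "finite M" unfolding M_def by (rule ns_msg_finite[OF ns])
  have genM: "gen M = S" unfolding M_def by (rule msg_gen[OF sub])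
  have mM: "m \<in> M" using mult_props(1)[OF ns] mm unfolding M_def by simp
  have mle: "\<And>a. a \<in> M \<Longrightarrow> m \<le> a" using mult_props(4)[OF ns] mm unfolding M_def by simp
  have "M \<noteq> {m, r}"
  proof
    assume "M = {m, r}"
    then have "S = gen {m, r}" using genM by simp
    then show False using ne by simp
  qed
  then obtain z where zM: "z \<in> M" and zn: "z \<noteq> m" "z \<noteq> r" using mM rM by blast
  have mr: "m < r" using mle[OF rM] rm by simp
  have rz: "r < z" using rle[OF zM zn(1)] zn(2) by simp
  have gmax: "g = Max M" unfolding g_def M_def maxgen_def ..
  have Mne: "M \<noteq> {}" using mM by blast
  have gM: "g \<in> M" unfolding gmax by (rule Max_in[OF fin Mne])
  have gge: "\<And>a. a \<in> M \<Longrightarrow> a \<le> g" unfolding gmax using Max_ge[OF fin] by blast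
  have zg: "z \<le> g" by (rule gge[OF zM])
  have "{m, r, z} \<subseteq> M" using mM rM zM by blast
  then have "card {m, r, z} \<le> card M" by (rule card_mono[OF fin])
  moreover have "card {m, r, z} = 3" using mr rz by simp
  ultimately show "card (msg S) \<ge> 3" unfolding M_def by simp
  show "card (msg S - {maxgen S}) = card (msg S) - 1"
    using gM fin unfolding M_def g_def by simp
  have mA: "m \<in> A" unfolding A_def using mM mr rz zg by simp
  have rA: "r \<in> A" unfolding A_def using rM rz zg by simp
  have AM: "A \<subseteq> M" unfolding A_def by blast
  have finA: "finite A" using fin AM finite_subset by blast
  have msgT: "msg (gen A) = A"
  proof (rule msg_char)
    show "gen A = gen A" ..
    show "\<forall>B. B \<subset> A \<longrightarrow> gen B \<noteq> gen A"
    proof (intro allI impI)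
      fix B assume BA: "B \<subset> A"
      show "gen B \<noteq> gen A"
      proof
        assume gB: "gen B = gen A"
        obtain a where aA: "a \<in> A" and aB: "a \<notin> B" using BA by blast
        have B'M: "insert g B \<subset> M"
        proof -
          have "insert g B \<subseteq> M" using BA AM gM by blast
          moreover have "a \<in> M" "a \<notin> insert g B" using aA aB unfolding A_def by auto
          ultimately show ?thesis by blast
        qed
        have "gen (insert g B) \<subseteq> S" using B'M gen_mono genM by blast
        moreover have "M \<subseteq> gen (insert g B)"
        proof
          fix x assume xM: "x \<in> M"
          show "x \<in> gen (insert g B)"
          proof (cases "x = g")
            case True then show ?thesis by (intro gen_subset) simp
          next
            case False
            then have "x \<in> gen A" using xM unfolding A_def by (intro gen_subset) simp
            then have "x \<in> gen B" using gB by simp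
            moreover have "gen B \<subseteq> gen (insert g B)" by (rule gen_mono) blast
            ultimately show ?thesis by blast
          qed
        qed
        then have "gen M \<subseteq> gen (insert g B)"
          using submon_gen[of "insert g B"] unfolding submon_def by (intro gen_least) auto
        ultimately have "gen (insert g B) = S" using genM by blast
        then show False using msg_min[OF sub] B'M unfolding M_def by blast
      qed
    qed
  qed
  show "msg (gen (msg S - {maxgen S})) = msg S - {maxgen S}"
    using msgT unfolding A_def M_def g_def .
  have multT: "mult (gen A) = m" unfolding mult_def msgT
    by (rule Min_eqI[OF finA]) (use mle AM mA in blast)+
  have sgenT: "sgen (gen A) = r" unfolding sgen_def multT msgT
  proof (rule Min_eqI)
    show "finite (A - {m})" using finA by simp
    show "r \<in> A - {m}" using rA rm by simp
    fix y assume "y \<in> A - {m}"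
    then show "r \<le> y" using rle AM by blast
  qed
  have subT: "submon (gen A)" by (rule submon_gen)
  have mT: "m \<in> gen A" by (rule gen_subset[OF mA])
  have rT: "r \<in> gen A" by (rule gen_subset[OF rA])
  have big: "x \<in> gen A" if x: "x \<ge> m * r" for x
  proof -
    define j where "j = x mod m"
    have jm: "j < m" unfolding j_def using m1 by simp
    have "j * r \<le> m * r" using jm by simp
    then have jx: "j * r \<le> x" using x by linarith
    have "(j * r) mod m = (j * (r mod m)) mod m" by (simp add: mod_mult_right_eq)
    also have "\<dots> = j" using rmod jm by simp
    finally have "x mod m = (j * r) mod m" unfolding j_def by simp
    moreover have "j * r \<in> gen A" by (rule gen_mult[OF rT])
    ultimately show ?thesis using same_res[OF subT mT _ jx] by blast
  qed
  have nsT: "numerical_semigroup (gen A)"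
    unfolding numerical_semigroup_def
  proof (intro conjI)
    show "0 \<in> gen A" by (rule gen.gen_zero)
    show "\<forall>x\<in>gen A. \<forall>y\<in>gen A. x + y \<in> gen A" using gen_closed by blast
    have "UNIV - gen A \<subseteq> {..< m * r}"
    proof
      fix x assume "x \<in> UNIV - gen A"
      then have "\<not> m * r \<le> x" using big by blast
      then show "x \<in> {..< m * r}" by simp
    qed
    then show "finite (UNIV - gen A)" using finite_subset by blast
  qed
  have H: "x - 1 \<in> gen A" if "x \<in> gen A" "x mod m \<ge> 2" for x
  proof (rule gen_pred_P[OF mA m1 rA rmod _ _ that])
    fix h assume "h \<in> A" "h mod m = 1"
    then have "h \<noteq> m" "h \<in> M" using AM by auto
    then show "r \<le> h" using rle by blast
  next
    fix h assume hA: "h \<in> A" and h2: "h mod m \<ge> 2"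
    have hM: "h \<in> M" using hA AM by blast
    have hS: "h \<in> S" using hM msg_sub[OF sub] unfolding M_def by blast
    have "h - 1 \<in> S" by (rule MANS_imp[OF M mm hS h2])
    then have "h - 1 \<in> gen M" using genM by simp
    then have h1: "h - 1 \<in> gen {b\<in>M. b \<le> h - 1}" by (rule gen_small)
    have hg: "h < g" using gge[OF hM] hA unfolding A_def by fastforce
    have "{b\<in>M. b \<le> h - 1} \<subseteq> A" unfolding A_def using hg by auto
    then have "gen {b\<in>M. b \<le> h - 1} \<subseteq> gen A" by (rule gen_mono)
    then show "h - 1 \<in> gen A" using h1 by blast
  qed
  have "MANS (gen A)" by (rule MANS_intro[OF nsT multT H])
  then have "gen A \<in> MA m r" unfolding MA_def using multT sgenT by simp
  then show "gen (msg S - {maxgen S}) \<in> MA m r" unfolding A_def M_def g_def .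
qed

theorem proposition4p8:
  fixes m r :: nat and S :: "nat set" and Sn :: "nat \<Rightarrow> nat set"
  assumes "m > 1" and "r > 2" and "S \<in> MA m r"
    and "Sn 0 = S"
    and "\<And>n. Sn (Suc n) = (if Sn n \<noteq> gen {m, r}
                              then gen (msg (Sn n) - {maxgen (Sn n)})
                              else gen {m, r})"
  shows "(\<forall>n. Sn n \<in> MA m r) \<and> (\<forall>k. k \<ge> embdim S - 2 \<longrightarrow> Sn k = gen {m, r})"
proof -
  have inv: "Sn n \<in> MA m r \<and> (Sn n = gen {m, r} \<or> embdim (Sn n) + n = embdim S)" for n
  proof (induction n)
    case 0 then show ?case using assms(3,4) by simp
  next
    case (Suc n)
    show ?case
    proof (cases "Sn n = gen {m, r}")
      case True
      then have "Sn (Suc n) = gen {m, r}" using assms(5)[of n] by simp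
      then show ?thesis using Suc.IH True by simp
    next
      case False
      then have e: "Sn (Suc n) = gen (msg (Sn n) - {maxgen (Sn n)})" using assms(5)[of n] by simp
      have SnM: "Sn n \<in> MA m r" using Suc.IH by simp
      have en: "embdim (Sn n) + n = embdim S" using Suc.IH False by simp
      note st = step_MA[OF SnM assms(1) False]
      have "Sn (Suc n) \<in> MA m r" using st(1) e by simp
      moreover have "embdim (Sn (Suc n)) = card (msg (Sn n)) - 1"
        unfolding embdim_def e st(2) st(4) ..
      then have "embdim (Sn (Suc n)) + Suc n = embdim S"
        using en st(3) unfolding embdim_def by simp
      ultimately show ?thesis by simp
    qed
  qed
  have part2: "Sn k = gen {m, r}" if k: "k \<ge> embdim S - 2" for k
  proof (rule ccontr)
    assume nk: "Sn k \<noteq> gen {m, r}"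
    have "Sn k \<in> MA m r" using inv by simp
    then have "card (msg (Sn k)) \<ge> 3" using step_MA(3)[OF _ assms(1) nk] by simp
    moreover have "embdim (Sn k) + k = embdim S" using inv[of k] nk by simp
    ultimately show False using k unfolding embdim_def by simp
  qed
  show ?thesis using inv part2 by simp
qed

end
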